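(* Let $G=(\pi,R)$ be a monogamy-of-entanglement game whose question set $X$ satisfies $|X|=2$. Then $\omega(G)=\omega^\ast(G)$.
   Context: A monogamy-of-entanglement game $G=(\pi,R)$ consists of a finite nonempty question set $X$, a probability distribution $\pi$ on $X$, a finite nonempty answer set $A$, a positive integer $m$, and positive semidefinite $m\times m$ matrices $R(a|x)$ ($a\in A$, $x\in X$) with $\sum_{a\in A}R(a|x)=\mathbb{1}$ for each $x$. The quantum value $\omega^\ast(G)$ is the supremum, over all finite-dimensional complex Hilbert spaces $\mathcal{A},\mathcal{B}$, all density operators $\rho$ on $\mathbb{C}^m\otimes\mathcal{A}\otimes\mathcal{B}$, and all families of POVMs $\{A^x_a:a\in A\}$ on $\mathcal{A}$ and $\{B^x_a:a\in A\}$ on $\mathcal{B}$ (one for each $x\in X$), of $\sum_{x\in X}\pi(x)\sum_{a\in A}\mathrm{Tr}\big((R(a|x)\otimes A^x_a\otimes B^x_a)\rho\big)$. The unentangled value $\omega(G)$ is the same supremum restricted to fully separable states $\rho=\sum_j p_j\rho^R_j\otimes\rho^A_j\otimes\rho^B_j$; it equals $\max_{f:X\to A}\big\|\sum_{x\in X}\pi(x)R(f(x)|x)\big\|$, where $\|\cdot\|$ is the operator (spectral) norm. *)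

theory Defs
  imports "Jordan_Normal_Form.Matrix"
begin

definition adj :: "complex mat \<Rightarrow> complex mat" where
  "adj A = mat (dim_col A) (dim_row A) (\<lambda>(i,j). cnj (A $$ (j,i)))"

definition mtrace :: "complex mat \<Rightarrow> complex" where
  "mtrace A = (\<Sum>i<dim_row A. A $$ (i,i))"

definition kron :: "complex mat \<Rightarrow> complex mat \<Rightarrow> complex mat" where
  "kron A B = mat (dim_row A * dim_row B) (dim_col A * dim_col B)
     (\<lambda>(i,j). A $$ (i div dim_row B, j div dim_col B) * B $$ (i mod dim_row B, j mod dim_col B))"

definition psd :: "nat \<Rightarrow> complex mat \<Rightarrow> bool" where
  "psd n A \<longleftrightarrow> A \<in> carrier_mat n n \<and> adj A = A \<and>
     (\<forall>v \<in> carrier_vec n. let q = (\<Sum>i<n. \<Sum>j<n. cnj (v $ i) * A $$ (i,j) * v $ j)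
                           in Im q = 0 \<and> Re q \<ge> 0)"

definition density :: "nat \<Rightarrow> complex mat \<Rightarrow> bool" where
  "density n \<rho> \<longleftrightarrow> psd n \<rho> \<and> mtrace \<rho> = 1"

definition msum :: "nat \<Rightarrow> 'i set \<Rightarrow> ('i \<Rightarrow> complex mat) \<Rightarrow> complex mat" where
  "msum n S f = mat n n (\<lambda>(i,j). \<Sum>s\<in>S. f s $$ (i,j))"

definition povm :: "nat \<Rightarrow> 'a set \<Rightarrow> ('a \<Rightarrow> complex mat) \<Rightarrow> bool" where
  "povm d Ans P \<longleftrightarrow> (\<forall>a\<in>Ans. psd d (P a)) \<and> msum d Ans P = 1\<^sub>m d"

text \<open>Monogamy-of-entanglement game G = (pi, R) with question set X, answer set Ans,
  referee dimension m and measurement operators R a x.\<close>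
definition moe_game :: "'x set \<Rightarrow> ('x \<Rightarrow> real) \<Rightarrow> 'a set \<Rightarrow> nat \<Rightarrow> ('a \<Rightarrow> 'x \<Rightarrow> complex mat) \<Rightarrow> bool" where
  "moe_game X \<pi> Ans m R \<longleftrightarrow> finite X \<and> X \<noteq> {} \<and> finite Ans \<and> Ans \<noteq> {} \<and> m > 0 \<and>
     (\<forall>x\<in>X. \<pi> x \<ge> 0) \<and> (\<Sum>x\<in>X. \<pi> x) = 1 \<and>
     (\<forall>x\<in>X. povm m Ans (\<lambda>a. R a x))"

definition win_prob :: "'x set \<Rightarrow> ('x \<Rightarrow> real) \<Rightarrow> 'a set \<Rightarrow> ('a \<Rightarrow> 'x \<Rightarrow> complex mat)
    \<Rightarrow> ('x \<Rightarrow> 'a \<Rightarrow> complex mat) \<Rightarrow> ('x \<Rightarrow> 'a \<Rightarrow> complex mat) \<Rightarrow> complex mat \<Rightarrow> real" where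
  "win_prob X \<pi> Ans R Aop Bop \<rho> =
     (\<Sum>x\<in>X. \<pi> x * (\<Sum>a\<in>Ans. Re (mtrace (kron (kron (R a x) (Aop x a)) (Bop x a) * \<rho>))))"

definition strategy :: "'x set \<Rightarrow> 'a set \<Rightarrow> nat \<Rightarrow> nat \<Rightarrow> nat \<Rightarrow>
    ('x \<Rightarrow> 'a \<Rightarrow> complex mat) \<Rightarrow> ('x \<Rightarrow> 'a \<Rightarrow> complex mat) \<Rightarrow> complex mat \<Rightarrow> bool" where
  "strategy X Ans m dA dB Aop Bop \<rho> \<longleftrightarrow>
     density (m * dA * dB) \<rho> \<and> (\<forall>x\<in>X. povm dA Ans (Aop x)) \<and> (\<forall>x\<in>X. povm dB Ans (Bop x))"

definition fully_separable :: "nat \<Rightarrow> nat \<Rightarrow> nat \<Rightarrow> complex mat \<Rightarrow> bool" where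
  "fully_separable m dA dB \<rho> \<longleftrightarrow>
     (\<exists>(k::nat) p \<rho>R \<rho>A \<rho>B. (\<forall>j<k. p j \<ge> (0::real)) \<and> (\<Sum>j<k. p j) = 1 \<and>
        (\<forall>j<k. density m (\<rho>R j) \<and> density dA (\<rho>A j) \<and> density dB (\<rho>B j)) \<and>
        \<rho> = msum (m * dA * dB) {..<k} (\<lambda>j. complex_of_real (p j) \<cdot>\<^sub>m kron (kron (\<rho>R j) (\<rho>A j)) (\<rho>B j)))"

definition quantum_value :: "'x set \<Rightarrow> ('x \<Rightarrow> real) \<Rightarrow> 'a set \<Rightarrow> nat \<Rightarrow> ('a \<Rightarrow> 'x \<Rightarrow> complex mat) \<Rightarrow> real" where
  "quantum_value X \<pi> Ans m R =
     Sup {win_prob X \<pi> Ans R Aop Bop \<rho> | dA dB Aop Bop \<rho>. strategy X Ans m dA dB Aop Bop \<rho>}"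

definition unentangled_value :: "'x set \<Rightarrow> ('x \<Rightarrow> real) \<Rightarrow> 'a set \<Rightarrow> nat \<Rightarrow> ('a \<Rightarrow> 'x \<Rightarrow> complex mat) \<Rightarrow> real" where
  "unentangled_value X \<pi> Ans m R =
     Sup {win_prob X \<pi> Ans R Aop Bop \<rho> | dA dB Aop Bop \<rho>.
            strategy X Ans m dA dB Aop Bop \<rho> \<and> fully_separable m dA dB \<rho>}"

end

theory Submission
  imports Defs
begin
definition qf :: "nat \<Rightarrow> complex mat \<Rightarrow> (nat \<Rightarrow> complex) \<Rightarrow> complex" where
  "qf n A f = (\<Sum>i<n. \<Sum>j<n. cnj (f i) * A $$ (i,j) * f j)"

definition herm :: "nat \<Rightarrow> complex mat \<Rightarrow> bool" where
  "herm n A \<longleftrightarrow> (\<forall>i<n. \<forall>j<n. A $$ (i,j) = cnj (A $$ (j,i)))"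

lemma psd_qf:
  assumes "psd n A" shows "Im (qf n A f) = 0" "Re (qf n A f) \<ge> 0"
proof -
  have v: "vec n f \<in> carrier_vec n" by simp
  have "qf n A f = (\<Sum>i<n. \<Sum>j<n. cnj (vec n f $ i) * A $$ (i,j) * vec n f $ j)"
    unfolding qf_def by (intro sum.cong refl) auto
  moreover have "Im (\<Sum>i<n. \<Sum>j<n. cnj (vec n f $ i) * A $$ (i,j) * vec n f $ j) = 0 \<and>
     Re (\<Sum>i<n. \<Sum>j<n. cnj (vec n f $ i) * A $$ (i,j) * vec n f $ j) \<ge> 0"
    using assms v unfolding psd_def Let_def by blast
  ultimately show "Im (qf n A f) = 0" "Re (qf n A f) \<ge> 0" by simp_all
qed

lemma psd_carrier: "psd n A \<Longrightarrow> A \<in> carrier_mat n n"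
  unfolding psd_def by simp

lemma psd_herm:
  assumes "psd n A" shows "herm n A"
proof -
  from assms have c: "A \<in> carrier_mat n n" and a: "adj A = A" unfolding psd_def by auto
  show ?thesis unfolding herm_def
  proof (intro allI impI)
    fix i j assume "i < n" "j < n"
    then have "adj A $$ (i,j) = cnj (A $$ (j,i))" using c unfolding adj_def by (simp add: index_mat)
    with a show "A $$ (i,j) = cnj (A $$ (j,i))" by simp
  qed
qed

lemma psdI:
  assumes c: "A \<in> carrier_mat n n" and h: "herm n A"
    and q: "\<And>f. Im (qf n A f) = 0 \<and> Re (qf n A f) \<ge> 0"
  shows "psd n A"
proof -
  have "adj A = A"
  proof (rule eq_matI)
    fix i j assume ij: "i < dim_row A" "j < dim_col A"
    have ij': "i < n" "j < n" using ij c by auto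
    then have "adj A $$ (i,j) = cnj (A $$ (j,i))" using c unfolding adj_def by (simp add: index_mat)
    also have "\<dots> = A $$ (i,j)"
    proof -
      have "A $$ (j,i) = cnj (A $$ (i,j))" using h ij' unfolding herm_def by blast
      then show ?thesis by simp
    qed
    finally show "adj A $$ (i,j) = A $$ (i,j)" .
  qed (use c in \<open>auto simp: adj_def\<close>)
  moreover have "\<forall>v \<in> carrier_vec n. let q = (\<Sum>i<n. \<Sum>j<n. cnj (v $ i) * A $$ (i,j) * v $ j)
                           in Im q = 0 \<and> Re q \<ge> 0"
  proof
    fix v :: "complex vec"
    show "let q = (\<Sum>i<n. \<Sum>j<n. cnj (v $ i) * A $$ (i,j) * v $ j) in Im q = 0 \<and> Re q \<ge> 0"
      using q[of "\<lambda>i. v $ i"] unfolding Let_def qf_def by blast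
  qed
  ultimately show ?thesis using c unfolding psd_def by blast
qed

lemma mult_ifz: "(x::'a::mult_zero) * (if P then a else 0) = (if P then x * a else 0)"
  "(if P then a else 0) * (x::'a::mult_zero) = (if P then a * x else 0)" by auto

lemma sum_ifz: "(\<Sum>j\<in>S. if P then g j else 0) = (if P then (\<Sum>j\<in>S. g j) else 0)" by auto

lemma cnj_ifz: "cnj (if P then a else 0) = (if P then cnj a else 0)" by auto

lemma qf_shift:
  assumes h: "herm n A" and k: "k < n"
  shows "qf n A (\<lambda>i. f i + (if i = k then t else 0)) =
     qf n A f + t * (\<Sum>i<n. cnj (f i) * A $$ (i,k)) + cnj t * cnj (\<Sum>i<n. cnj (f i) * A $$ (i,k))
       + cnj t * t * A $$ (k,k)"
proof -
  define e where "e = (\<lambda>i::nat. if i = k then t else 0)"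
  have "qf n A (\<lambda>i. f i + e i) = (\<Sum>i<n. \<Sum>j<n. cnj (f i) * A$$(i,j) * f j + cnj (f i) * A$$(i,j) * e j
       + cnj (e i) * A$$(i,j) * f j + cnj (e i) * A$$(i,j) * e j)"
    unfolding qf_def by (intro sum.cong refl) (simp add: algebra_simps)
  also have "\<dots> = qf n A f + (\<Sum>i<n. \<Sum>j<n. cnj (f i) * A$$(i,j) * e j)
       + (\<Sum>i<n. \<Sum>j<n. cnj (e i) * A$$(i,j) * f j) + (\<Sum>i<n. \<Sum>j<n. cnj (e i) * A$$(i,j) * e j)"
    unfolding qf_def by (simp add: sum.distrib)
  also have "(\<Sum>i<n. \<Sum>j<n. cnj (f i) * A$$(i,j) * e j) = t * (\<Sum>i<n. cnj (f i) * A $$ (i,k))"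
    using k by (simp add: e_def sum_distrib_left mult_ifz cnj_ifz sum_ifz algebra_simps)
  also have "(\<Sum>i<n. \<Sum>j<n. cnj (e i) * A$$(i,j) * f j) = cnj t * (\<Sum>j<n. A$$(k,j) * f j)"
    using k by (simp add: e_def sum_distrib_left mult_ifz cnj_ifz sum_ifz algebra_simps)
  also have "(\<Sum>j<n. A$$(k,j) * f j) = cnj (\<Sum>i<n. cnj (f i) * A $$ (i,k))"
  proof -
    have "\<And>j. j < n \<Longrightarrow> A$$(k,j) = cnj (A$$(j,k))" using h k unfolding herm_def by blast
    then show ?thesis by (simp add: mult.commute)
  qed
  also have "(\<Sum>i<n. \<Sum>j<n. cnj (e i) * A$$(i,j) * e j) = cnj t * t * A $$ (k,k)"
    using k by (simp add: e_def mult_ifz cnj_ifz sum_ifz algebra_simps)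
  finally show ?thesis unfolding e_def by simp
qed

lemma qf_delta:
  assumes "j < n"
  shows "qf n A (\<lambda>i. if i = j then 1 else 0) = A $$ (j,j)"
  using assms unfolding qf_def by (simp add: mult_ifz cnj_ifz sum_ifz)

lemma psd_diag:
  assumes "psd n A" "j < n"
  shows "A $$ (j,j) = complex_of_real (Re (A $$ (j,j)))" "Re (A $$ (j,j)) \<ge> 0"
proof -
  have "Im (A $$ (j,j)) = 0" "Re (A $$ (j,j)) \<ge> 0"
    using psd_qf[OF assms(1), of "\<lambda>i. if i = j then 1 else 0"] qf_delta[OF assms(2)] by auto
  then show "A $$ (j,j) = complex_of_real (Re (A $$ (j,j)))" "Re (A $$ (j,j)) \<ge> 0"
    by (auto simp: complex_eq_iff)
qed

lemma psd_col_zero: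
  assumes p: "psd n A" and k: "k < n" and c: "A $$ (k,k) = 0" and j: "j < n"
  shows "A $$ (j,k) = 0"
proof (rule ccontr)
  assume nz: "A $$ (j,k) \<noteq> 0"
  define z where "z = A $$ (j,k)"
  define f where "f = (\<lambda>i::nat. if i = j then (1::complex) else 0)"
  have h: "herm n A" using psd_herm[OF p] .
  have zf: "(\<Sum>i<n. cnj (f i) * A $$ (i,k)) = z" using j unfolding f_def z_def
    by (simp add: mult_ifz cnj_ifz)
  have qf: "qf n A f = A $$ (j,j)" unfolding f_def using qf_delta[OF j] .
  define w where "w = (cmod z)^2"
  have wpos: "w > 0" using nz unfolding w_def z_def by simp
  have zz: "z * cnj z = complex_of_real w" unfolding w_def by (simp add: complex_norm_square[symmetric] del: of_real_power)
  define s where "s = (Re (A $$ (j,j)) + 1) / w"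
  define t where "t = - complex_of_real s * cnj z"
  have "qf n A (\<lambda>i. f i + (if i = k then t else 0)) = A $$ (j,j) + t * z + cnj t * cnj z + cnj t * t * A$$(k,k)"
    using qf_shift[OF h k, of f t] zf qf by simp
  also have "\<dots> = A $$ (j,j) - 2 * complex_of_real s * (z * cnj z)"
    using c unfolding t_def by (simp add: algebra_simps)
  also have "\<dots> = A $$ (j,j) - complex_of_real (2 * s * w)" using zz by simp
  finally have eq: "qf n A (\<lambda>i. f i + (if i = k then t else 0)) = A $$ (j,j) - complex_of_real (2 * s * w)" .
  have "Re (qf n A (\<lambda>i. f i + (if i = k then t else 0))) \<ge> 0" using psd_qf[OF p] by blast
  then have "Re (A $$ (j,j)) \<ge> 2 * s * w" unfolding eq by simp
  moreover have "s * w = Re (A $$ (j,j)) + 1" unfolding s_def using wpos by simp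
  moreover have "Re (A $$ (j,j)) \<ge> 0" using psd_diag[OF p j] by simp
  ultimately show False by linarith
qed

lemma pivot_psd:
  assumes p: "psd n A" and k: "k < n" and r: "A $$ (k,k) = complex_of_real r" and rpos: "r > 0"
  defines "w0 \<equiv> (\<lambda>i. A $$ (i,k) / complex_of_real (sqrt r))"
  shows "psd n (mat n n (\<lambda>(i,j). A $$ (i,j) - w0 i * cnj (w0 j)))"
    (is "psd n ?A'")
proof (rule psdI)
  have h: "herm n A" using psd_herm[OF p] .
  show "?A' \<in> carrier_mat n n" by simp
  show "herm n ?A'" unfolding herm_def
  proof (intro allI impI)
    fix i j assume ij: "i < n" "j < n"
    have "A $$ (i,j) = cnj (A $$ (j,i))" using h ij unfolding herm_def by blast
    then show "?A' $$ (i,j) = cnj (?A' $$ (j,i))" using ij by simp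
  qed
  fix f
  define z where "z = (\<Sum>i<n. cnj (f i) * A $$ (i,k))"
  define t where "t = - cnj z / complex_of_real r"
  define Y where "Y = (\<Sum>i<n. cnj (f i) * w0 i)"
  have Yz: "Y = z / complex_of_real (sqrt r)" unfolding Y_def z_def w0_def
    by (simp add: sum_divide_distrib)
  have sq: "complex_of_real (sqrt r) ^ 2 = complex_of_real r"
    using rpos by (metis of_real_power real_sqrt_pow2 less_imp_le)
  have "qf n ?A' f = (\<Sum>i<n. \<Sum>j<n. cnj (f i) * A $$ (i,j) * f j - (cnj (f i) * w0 i) * (cnj (w0 j) * f j))"
    unfolding qf_def by (intro sum.cong refl) (simp add: algebra_simps)
  also have "\<dots> = qf n A f - Y * (\<Sum>j<n. cnj (w0 j) * f j)"
    unfolding qf_def Y_def by (simp add: sum_subtractf sum_product)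
  also have "(\<Sum>j<n. cnj (w0 j) * f j) = cnj Y" unfolding Y_def by (simp add: mult.commute)
  finally have e1: "qf n ?A' f = qf n A f - z * cnj z / complex_of_real r"
    unfolding Yz using rpos by (simp add: field_simps power2_eq_square[symmetric] sq)
  have e2: "qf n A (\<lambda>i. f i + (if i = k then t else 0)) = qf n A f + t * z + cnj t * cnj z + cnj t * t * A$$(k,k)"
    using qf_shift[OF h k, of f t] unfolding z_def by simp
  have "qf n A (\<lambda>i. f i + (if i = k then t else 0)) = qf n ?A' f"
  proof -
    have tt: "t * z + cnj t * cnj z + cnj t * t * complex_of_real r = - (z * cnj z / complex_of_real r)"
      unfolding t_def using rpos by (simp add: field_simps power2_eq_square)
    show ?thesis unfolding e1 e2 r using tt by (metis (no_types, lifting) add.assoc diff_conv_add_uminus)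
  qed
  then show "Im (qf n ?A' f) = 0 \<and> Re (qf n ?A' f) \<ge> 0" using psd_qf[OF p] by metis
qed

lemma decomp_aux:
  "\<forall>A. psd n A \<longrightarrow> (\<forall>i<n. \<forall>j<n. (i < n - d \<or> j < n - d) \<longrightarrow> A $$ (i,j) = 0) \<longrightarrow>
     (\<exists>(K::nat) w. \<forall>i<n. \<forall>j<n. A $$ (i,j) = (\<Sum>l<K. w l i * cnj (w l j)))"
proof (induction d)
  case 0
  show ?case
  proof (intro allI impI)
    fix A :: "complex mat"
    assume a: "\<forall>i<n. \<forall>j<n. (i < n - 0 \<or> j < n - 0) \<longrightarrow> A $$ (i,j) = 0"
    have z: "\<forall>i<n. \<forall>j<n. A $$ (i,j) = 0" using a by (metis diff_zero)
    define w0 where "w0 = (\<lambda>(_::nat) (_::nat). 0::complex)"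
    have "\<forall>i<n. \<forall>j<n. A $$ (i,j) = (\<Sum>l<(0::nat). w0 l i * cnj (w0 l j))"
    proof (intro allI impI)
      fix i j assume "i < n" "j < n"
      then have "A $$ (i,j) = 0" using z by blast
      then show "A $$ (i,j) = (\<Sum>l<(0::nat). w0 l i * cnj (w0 l j))" by simp
    qed
    then show "\<exists>(K::nat) w. \<forall>i<n. \<forall>j<n. A $$ (i,j) = (\<Sum>l<K. w l i * cnj (w l j))" by blast
  qed
next
  case (Suc d)
  show ?case
  proof (intro allI impI)
    fix A :: "complex mat"
    assume p: "psd n A" and Z: "\<forall>i<n. \<forall>j<n. (i < n - Suc d \<or> j < n - Suc d) \<longrightarrow> A $$ (i,j) = 0"
    show "\<exists>(K::nat) w. \<forall>i<n. \<forall>j<n. A $$ (i,j) = (\<Sum>l<K. w l i * cnj (w l j))"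
    proof (cases "d < n")
      case False
      then have nn: "n - Suc d = n - d" by simp
      have "\<forall>i<n. \<forall>j<n. (i < n - d \<or> j < n - d) \<longrightarrow> A $$ (i,j) = 0" using Z unfolding nn .
      then show ?thesis by (rule mp[OF mp[OF spec[OF Suc.IH, of A] p]])
    next
      case True
      define k where "k = n - Suc d"
      have k: "k < n" and nd: "n - d = Suc k" unfolding k_def using True by auto
      have h: "herm n A" using psd_herm[OF p] .
      have Zk: "\<And>i j. i < n \<Longrightarrow> j < n \<Longrightarrow> i < k \<or> j < k \<Longrightarrow> A $$ (i,j) = 0"
        using Z unfolding k_def by blast
      show ?thesis
      proof (cases "A $$ (k,k) = 0")
        case True
        have col: "\<And>j. j < n \<Longrightarrow> A $$ (j,k) = 0" using psd_col_zero[OF p k True] .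
        have row: "\<And>j. j < n \<Longrightarrow> A $$ (k,j) = 0"
        proof -
          fix j assume j: "j < n"
          have "A $$ (k,j) = cnj (A $$ (j,k))" using h j k unfolding herm_def by blast
          then show "A $$ (k,j) = 0" using col[OF j] by simp
        qed
        have "\<forall>i<n. \<forall>j<n. (i < n - d \<or> j < n - d) \<longrightarrow> A $$ (i,j) = 0"
        proof (intro allI impI)
          fix i j assume ij: "i < n" "j < n" and "i < n - d \<or> j < n - d"
          then have "i < k \<or> j < k \<or> i = k \<or> j = k" unfolding nd by auto
          then show "A $$ (i,j) = 0" using Zk[OF ij] col[OF ij(1)] row[OF ij(2)] by auto
        qed
        then show ?thesis by (rule mp[OF mp[OF spec[OF Suc.IH, of A] p]])
      next
        case False
        define r where "r = Re (A $$ (k,k))"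
        have r: "A $$ (k,k) = complex_of_real r" unfolding r_def using psd_diag(1)[OF p k] .
        have "r \<ge> 0" using psd_diag(2)[OF p k] unfolding r_def .
        moreover have "r \<noteq> 0" using False r by auto
        ultimately have rpos: "r > 0" by linarith
        define w0 where "w0 = (\<lambda>i. A $$ (i,k) / complex_of_real (sqrt r))"
        define A' where "A' = mat n n (\<lambda>(i,j). A $$ (i,j) - w0 i * cnj (w0 j))"
        have pA': "psd n A'" unfolding A'_def w0_def using pivot_psd[OF p k r rpos] .
        have sq: "complex_of_real (sqrt r) * complex_of_real (sqrt r) = complex_of_real r"
        proof -
          have "sqrt r * sqrt r = r" using rpos by simp
          then show ?thesis by (metis of_real_mult)
        qed
        have w0k: "w0 k * cnj (w0 j) = A $$ (k,j)" if j: "j < n" for j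
        proof -
          have "A $$ (j,k) = cnj (A $$ (k,j))" using h j k unfolding herm_def by blast
          then have "cnj (A $$ (j,k)) = A $$ (k,j)" by simp
          then have "w0 k * cnj (w0 j) = complex_of_real r * A $$ (k,j) / complex_of_real r"
            unfolding w0_def r sq[symmetric] by simp
          then show ?thesis using rpos by simp
        qed
        have w0k': "w0 i * cnj (w0 k) = A $$ (i,k)" if i: "i < n" for i
        proof -
          have "w0 i * cnj (w0 k) = A $$ (i,k) * complex_of_real r / complex_of_real r"
            unfolding w0_def r sq[symmetric] by simp
          then show ?thesis using rpos by simp
        qed
        have "\<forall>i<n. \<forall>j<n. (i < n - d \<or> j < n - d) \<longrightarrow> A' $$ (i,j) = 0"
        proof (intro allI impI)
          fix i j assume ij: "i < n" "j < n" and "i < n - d \<or> j < n - d"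
          then have c4: "i < k \<or> j < k \<or> i = k \<or> j = k" unfolding nd by auto
          have A'ij: "A' $$ (i,j) = A $$ (i,j) - w0 i * cnj (w0 j)" unfolding A'_def using ij by simp
          show "A' $$ (i,j) = 0"
          proof -
            { assume "i < k"
              then have "A $$ (i,j) = 0" "A $$ (i,k) = 0" using Zk[OF ij] Zk[OF ij(1) k] by blast+
              then have ?thesis unfolding A'ij w0_def by simp }
            moreover
            { assume "j < k"
              then have "A $$ (i,j) = 0" "A $$ (j,k) = 0" using Zk[OF ij] Zk[OF ij(2) k] by blast+
              then have ?thesis unfolding A'ij w0_def by simp }
            moreover
            { assume ik: "i = k"
              have ?thesis unfolding A'ij by (simp only: ik w0k[OF ij(2)] diff_self) }
            moreover
            { assume jk: "j = k"
              have ?thesis unfolding A'ij by (simp only: jk w0k'[OF ij(1)] diff_self) }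
            ultimately show ?thesis using c4 by blast
          qed
        qed
        then have "\<exists>(K::nat) w. \<forall>i<n. \<forall>j<n. A' $$ (i,j) = (\<Sum>l<K. w l i * cnj (w l j))"
          by (rule mp[OF mp[OF spec[OF Suc.IH, of A'] pA']])
        then obtain K :: nat and w where Kw: "\<forall>i<n. \<forall>j<n. A' $$ (i,j) = (\<Sum>l<K. w l i * cnj (w l j))"
          by blast
        define w' where "w' = w(K := w0)"
        have "\<forall>i<n. \<forall>j<n. A $$ (i,j) = (\<Sum>l<Suc K. w' l i * cnj (w' l j))"
        proof (intro allI impI)
          fix i j assume ij: "i < n" "j < n"
          have "A $$ (i,j) = A' $$ (i,j) + w0 i * cnj (w0 j)" unfolding A'_def using ij by simp
          also have "\<dots> = (\<Sum>l<K. w l i * cnj (w l j)) + w0 i * cnj (w0 j)" using Kw ij by simp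
          also have "(\<Sum>l<K. w l i * cnj (w l j)) = (\<Sum>l<K. w' l i * cnj (w' l j))"
            unfolding w'_def by (intro sum.cong) auto
          finally show "A $$ (i,j) = (\<Sum>l<Suc K. w' l i * cnj (w' l j))" unfolding w'_def by simp
        qed
        then show ?thesis by (intro exI[of _ "Suc K"] exI[of _ w'])
      qed
    qed
  qed
qed

lemma psd_decomp:
  assumes "psd n A"
  shows "\<exists>(K::nat) w. \<forall>i<n. \<forall>j<n. A $$ (i,j) = (\<Sum>l<K. w l i * cnj (w l j))"
proof -
  have "\<forall>i<n. \<forall>j<n. (i < n - n \<or> j < n - n) \<longrightarrow> A $$ (i,j) = 0" by simp
  then show ?thesis by (rule mp[OF mp[OF spec[OF decomp_aux[of n n], of A] assms]])
qed

lemma kron_dims[simp]: "dim_row (kron A B) = dim_row A * dim_row B" "dim_col (kron A B) = dim_col A * dim_col B"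
  unfolding kron_def by simp_all

lemma kron_index:
  "i < dim_row A * dim_row B \<Longrightarrow> j < dim_col A * dim_col B \<Longrightarrow>
   kron A B $$ (i,j) = A $$ (i div dim_row B, j div dim_col B) * B $$ (i mod dim_row B, j mod dim_col B)"
  unfolding kron_def by simp

lemma kron_carrier: "A \<in> carrier_mat a a \<Longrightarrow> B \<in> carrier_mat b b \<Longrightarrow> kron A B \<in> carrier_mat (a*b) (a*b)"
  by auto

lemma msum_carrier[simp]: "msum n S F \<in> carrier_mat n n"
  unfolding msum_def by simp

lemma msum_dims[simp]: "dim_row (msum n S F) = n" "dim_col (msum n S F) = n"
  unfolding msum_def by simp_all

lemma msum_index: "i < n \<Longrightarrow> j < n \<Longrightarrow> msum n S F $$ (i,j) = (\<Sum>s\<in>S. F s $$ (i,j))"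
  unfolding msum_def by simp

lemma div_lt: "i < a * b \<Longrightarrow> i div b < (a::nat)"
  by (simp add: less_mult_imp_div_less)

lemma mod_lt: "i < a * b \<Longrightarrow> i mod b < (b::nat)"
  by (metis mod_less_divisor mult_zero_right not_less_zero zero_less_iff_neq_zero)

lemma kron_msum2:
  assumes A: "A \<in> carrier_mat a a" and F: "\<And>s. s \<in> S \<Longrightarrow> F s \<in> carrier_mat b b"
  shows "kron A (msum b S F) = msum (a*b) S (\<lambda>s. kron A (F s))"
proof (rule eq_matI)
  fix i j assume "i < dim_row (msum (a*b) S (\<lambda>s. kron A (F s)))" "j < dim_col (msum (a*b) S (\<lambda>s. kron A (F s)))"
  then have ij: "i < a*b" "j < a*b" by auto
  have "kron A (msum b S F) $$ (i,j) = A $$ (i div b, j div b) * (\<Sum>s\<in>S. F s $$ (i mod b, j mod b))"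
    using ij A by (simp add: kron_index msum_index mod_lt)
  also have "\<dots> = (\<Sum>s\<in>S. kron A (F s) $$ (i,j))"
    unfolding sum_distrib_left
  proof (rule sum.cong[OF refl])
    fix s assume "s \<in> S"
    then show "A $$ (i div b, j div b) * F s $$ (i mod b, j mod b) = kron A (F s) $$ (i,j)"
      using F[of s] A ij by (simp add: kron_index)
  qed
  also have "\<dots> = msum (a*b) S (\<lambda>s. kron A (F s)) $$ (i,j)" using ij by (simp add: msum_index)
  finally show "kron A (msum b S F) $$ (i,j) = msum (a*b) S (\<lambda>s. kron A (F s)) $$ (i,j)" .
qed (use A in auto)

lemma kron_msum1:
  assumes B: "B \<in> carrier_mat b b" and F: "\<And>s. s \<in> S \<Longrightarrow> F s \<in> carrier_mat a a"
  shows "kron (msum a S F) B = msum (a*b) S (\<lambda>s. kron (F s) B)"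
proof (rule eq_matI)
  fix i j assume "i < dim_row (msum (a*b) S (\<lambda>s. kron (F s) B))" "j < dim_col (msum (a*b) S (\<lambda>s. kron (F s) B))"
  then have ij: "i < a*b" "j < a*b" by auto
  have "kron (msum a S F) B $$ (i,j) = (\<Sum>s\<in>S. F s $$ (i div b, j div b)) * B $$ (i mod b, j mod b)"
    using ij B by (simp add: kron_index msum_index div_lt)
  also have "\<dots> = (\<Sum>s\<in>S. kron (F s) B $$ (i,j))"
    unfolding sum_distrib_right
  proof (rule sum.cong[OF refl])
    fix s assume "s \<in> S"
    then show "F s $$ (i div b, j div b) * B $$ (i mod b, j mod b) = kron (F s) B $$ (i,j)"
      using F[of s] B ij by (simp add: kron_index)
  qed
  also have "\<dots> = msum (a*b) S (\<lambda>s. kron (F s) B) $$ (i,j)" using ij by (simp add: msum_index)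
  finally show "kron (msum a S F) B $$ (i,j) = msum (a*b) S (\<lambda>s. kron (F s) B) $$ (i,j)" .
qed (use B in auto)

lemma kron_add1:
  assumes "A \<in> carrier_mat a a" "C \<in> carrier_mat a a" "B \<in> carrier_mat b b"
  shows "kron (A + C) B = kron A B + kron C B"
  by (rule eq_matI) (use assms in \<open>auto simp: kron_index div_lt algebra_simps\<close>)

lemma kron_minus1:
  assumes "A \<in> carrier_mat a a" "C \<in> carrier_mat a a" "B \<in> carrier_mat b b"
  shows "kron (A - C) B = kron A B - kron C B"
  by (rule eq_matI) (use assms in \<open>auto simp: kron_index div_lt algebra_simps\<close>)

lemma kron_smult1:
  assumes "A \<in> carrier_mat a a" "B \<in> carrier_mat b b"
  shows "kron (c \<cdot>\<^sub>m A) B = c \<cdot>\<^sub>m kron A B"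
  by (rule eq_matI) (use assms in \<open>auto simp: kron_index div_lt algebra_simps\<close>)

lemma kron_one: "kron (1\<^sub>m a) (1\<^sub>m b) = 1\<^sub>m (a*b)"
proof (rule eq_matI)
  fix i j assume "i < dim_row (1\<^sub>m (a*b))" "j < dim_col (1\<^sub>m (a*b))"
  then have ij: "i < a*b" "j < a*b" by auto
  have "(i div b = j div b \<and> i mod b = j mod b) = (i = j)"
    by (metis div_mult_mod_eq)
  then show "kron (1\<^sub>m a) (1\<^sub>m b) $$ (i,j) = 1\<^sub>m (a*b) $$ (i,j)"
    using ij by (auto simp: kron_index div_lt mod_lt)
qed auto

lemma qf_cong: "(\<And>i j. i < n \<Longrightarrow> j < n \<Longrightarrow> A $$ (i,j) = B $$ (i,j)) \<Longrightarrow> qf n A f = qf n B f"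
  unfolding qf_def by (intro sum.cong refl) auto

lemma qf_add: "A \<in> carrier_mat n n \<Longrightarrow> B \<in> carrier_mat n n \<Longrightarrow> qf n (A + B) f = qf n A f + qf n B f"
  unfolding qf_def by (simp add: sum.distrib[symmetric] algebra_simps)

lemma qf_minus: "A \<in> carrier_mat n n \<Longrightarrow> B \<in> carrier_mat n n \<Longrightarrow> qf n (A - B) f = qf n A f - qf n B f"
  unfolding qf_def by (simp add: sum_subtractf[symmetric] algebra_simps)

lemma qf_smult: "A \<in> carrier_mat n n \<Longrightarrow> qf n (c \<cdot>\<^sub>m A) f = c * qf n A f"
  unfolding qf_def by (simp add: sum_distrib_left algebra_simps)

lemma qf_msum: "qf n (msum n S F) f = (\<Sum>s\<in>S. qf n (F s) f)"
proof -
  have "qf n (msum n S F) f = (\<Sum>i<n. \<Sum>j<n. \<Sum>s\<in>S. cnj (f i) * F s $$ (i,j) * f j)"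
    unfolding qf_def by (intro sum.cong refl) (simp add: msum_index sum_distrib_left sum_distrib_right)
  also have "\<dots> = (\<Sum>i<n. \<Sum>s\<in>S. \<Sum>j<n. cnj (f i) * F s $$ (i,j) * f j)"
    by (intro sum.cong refl) (rule sum.swap)
  also have "\<dots> = (\<Sum>s\<in>S. \<Sum>i<n. \<Sum>j<n. cnj (f i) * F s $$ (i,j) * f j)"
    by (rule sum.swap)
  finally show ?thesis unfolding qf_def .
qed

lemma qf_one: "qf n (1\<^sub>m n) f = (\<Sum>i<n. cnj (f i) * f i)"
  unfolding qf_def by (simp add: mult_ifz sum_ifz)

lemma psd_msum:
  assumes "\<And>s. s \<in> S \<Longrightarrow> psd n (F s)"
  shows "psd n (msum n S F)"
proof (rule psdI)
  show "msum n S F \<in> carrier_mat n n" by simp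
  show "herm n (msum n S F)" unfolding herm_def
  proof (intro allI impI)
    fix i j assume ij: "i < n" "j < n"
    have "\<And>s. s \<in> S \<Longrightarrow> F s $$ (i,j) = cnj (F s $$ (j,i))"
      using psd_herm[OF assms] ij unfolding herm_def by blast
    then show "msum n S F $$ (i,j) = cnj (msum n S F $$ (j,i))"
      using ij by (simp add: msum_index)
  qed
  fix f
  have "Im (qf n (msum n S F) f) = 0" unfolding qf_msum Im_sum
    using psd_qf(1)[OF assms] by simp
  moreover have "Re (qf n (msum n S F) f) \<ge> 0" unfolding qf_msum Re_sum
    using psd_qf(2)[OF assms] by (simp add: sum_nonneg)
  ultimately show "Im (qf n (msum n S F) f) = 0 \<and> Re (qf n (msum n S F) f) \<ge> 0" by blast
qed

lemma psd_add:
  assumes A: "psd n A" and B: "psd n B"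
  shows "psd n (A + B)"
proof (rule psdI)
  have cA: "A \<in> carrier_mat n n" and cB: "B \<in> carrier_mat n n" using A B psd_carrier by auto
  then show "A + B \<in> carrier_mat n n" by simp
  show "herm n (A + B)" unfolding herm_def
  proof (intro allI impI)
    fix i j assume ij: "i < n" "j < n"
    have "A $$ (i,j) = cnj (A $$ (j,i))" "B $$ (i,j) = cnj (B $$ (j,i))"
      using psd_herm[OF A] psd_herm[OF B] ij unfolding herm_def by blast+
    then show "(A + B) $$ (i,j) = cnj ((A + B) $$ (j,i))" using ij cA cB by simp
  qed
  fix f
  show "Im (qf n (A + B) f) = 0 \<and> Re (qf n (A + B) f) \<ge> 0"
    unfolding qf_add[OF cA cB] using psd_qf[OF A, of f] psd_qf[OF B, of f] by simp
qed

lemma psd_smult: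
  assumes A: "psd n A" and c: "c \<ge> 0"
  shows "psd n (complex_of_real c \<cdot>\<^sub>m A)"
proof (rule psdI)
  have cA: "A \<in> carrier_mat n n" using A psd_carrier by auto
  then show "complex_of_real c \<cdot>\<^sub>m A \<in> carrier_mat n n" by simp
  show "herm n (complex_of_real c \<cdot>\<^sub>m A)" unfolding herm_def
  proof (intro allI impI)
    fix i j assume ij: "i < n" "j < n"
    have "A $$ (i,j) = cnj (A $$ (j,i))"
      using psd_herm[OF A] ij unfolding herm_def by blast+
    then show "(complex_of_real c \<cdot>\<^sub>m A) $$ (i,j) = cnj ((complex_of_real c \<cdot>\<^sub>m A) $$ (j,i))" using ij cA by simp
  qed
  fix f
  show "Im (qf n (complex_of_real c \<cdot>\<^sub>m A) f) = 0 \<and> Re (qf n (complex_of_real c \<cdot>\<^sub>m A) f) \<ge> 0"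
    unfolding qf_smult[OF cA] using psd_qf[OF A, of f] c by simp
qed

lemma sumsq_real: "(\<Sum>i\<in>S. cnj (f i) * f i) = complex_of_real (\<Sum>i\<in>S. (cmod (f i))^2)"
proof -
  have "(\<Sum>i\<in>S. cnj (f i) * f i) = (\<Sum>i\<in>S. complex_of_real ((cmod (f i))^2))"
    by (rule sum.cong[OF refl]) (metis complex_norm_square mult.commute)
  also have "\<dots> = complex_of_real (\<Sum>i\<in>S. (cmod (f i))^2)" by (rule of_real_sum[symmetric])
  finally show ?thesis .
qed

lemma psd_one: "psd n (1\<^sub>m n)"
proof (rule psdI)
  show "1\<^sub>m n \<in> carrier_mat n n" by simp
  show "herm n (1\<^sub>m n)" unfolding herm_def by simp
  fix f
  have "(\<Sum>i<n. cnj (f i) * f i) = complex_of_real (\<Sum>i<n. (cmod (f i))^2)"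
    by (rule sumsq_real)
  then show "Im (qf n (1\<^sub>m n) f) = 0 \<and> Re (qf n (1\<^sub>m n) f) \<ge> 0"
    unfolding qf_one by (simp add: sum_nonneg)
qed

lemma sum_split_mult: "(\<Sum>I<a*b. g I) = (\<Sum>r<a. \<Sum>c<(b::nat). g (r*b+c))"
proof (induction a)
  case 0 then show ?case by simp
next
  case (Suc a)
  have "{..<Suc a * b} = {..<a*b} \<union> {a*b..<a*b+b}" by auto
  then have "(\<Sum>I<Suc a*b. g I) = (\<Sum>I<a*b. g I) + (\<Sum>I\<in>{a*b..<a*b+b}. g I)"
    by (simp add: sum.union_disjoint ivl_disj_int)
  also have "(\<Sum>I\<in>{a*b..<a*b+b}. g I) = (\<Sum>c<b. g (a*b+c))"
  proof -
    have "(\<Sum>I\<in>{a*b..<a*b+b}. g I) = (\<Sum>I\<in>{0+a*b..<b+a*b}. g I)" by (simp add: add.commute)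
    also have "\<dots> = (\<Sum>c\<in>{0..<b}. g (c + a*b))"
      by (rule sum.shift_bounds_nat_ivl)
    finally have "(\<Sum>I\<in>{a*b..<a*b+b}. g I) = (\<Sum>c\<in>{0..<b}. g (c + a*b))" .
    then show ?thesis by (simp add: lessThan_atLeast0 add.commute)
  qed
  finally show ?case using Suc.IH by simp
qed

lemma divmod_simp: "c < (b::nat) \<Longrightarrow> (r*b+c) div b = r" "c < b \<Longrightarrow> (r*b+c) mod b = c"
  by simp_all

lemma kron_rank1_qf:
  assumes Q: "Q \<in> carrier_mat b b"
  shows "qf (a*b) (kron (mat a a (\<lambda>(i,j). v i * cnj (v j))) Q) f =
         qf b Q (\<lambda>c. \<Sum>r<a. cnj (v r) * f (r*b+c))"
proof -
  define T where "T = (\<lambda>r c r' c'. cnj (f (r*b+c)) * v r * cnj (v r') * Q $$ (c,c') * f (r'*b+c'))"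
  have rb: "r*b+c < a*b" if "r < a" "c < b" for r c
  proof -
    have "r*b+c < r*b+b" using that by simp
    also have "\<dots> = Suc r * b" by simp
    also have "\<dots> \<le> a*b" using that by (intro mult_right_mono) auto
    finally show ?thesis .
  qed
  have "qf (a*b) (kron (mat a a (\<lambda>(i,j). v i * cnj (v j))) Q) f =
     (\<Sum>r<a. \<Sum>c<b. \<Sum>r'<a. \<Sum>c'<b. T r c r' c')"
    unfolding qf_def sum_split_mult
  proof (intro sum.cong refl)
    fix r c r' c' assume "r \<in> {..<a}" "c \<in> {..<b}" "r' \<in> {..<a}" "c' \<in> {..<b}"
    then have *: "r < a" "c < b" "r' < a" "c' < b" by auto
    show "cnj (f (r*b+c)) * kron (mat a a (\<lambda>(i,j). v i * cnj (v j))) Q $$ (r*b+c, r'*b+c') * f (r'*b+c') = T r c r' c'"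
      using * Q rb[of r c] rb[of r' c'] unfolding T_def by (simp add: kron_index divmod_simp)
  qed
  also have "\<dots> = (\<Sum>c<b. \<Sum>r<a. \<Sum>r'<a. \<Sum>c'<b. T r c r' c')"
    by (rule sum.swap)
  also have "\<dots> = (\<Sum>c<b. \<Sum>r<a. \<Sum>c'<b. \<Sum>r'<a. T r c r' c')"
    by (rule sum.cong[OF refl], rule sum.cong[OF refl], rule sum.swap)
  also have "\<dots> = (\<Sum>c<b. \<Sum>c'<b. \<Sum>r<a. \<Sum>r'<a. T r c r' c')"
    by (rule sum.cong[OF refl], rule sum.swap)
  also have "\<dots> = qf b Q (\<lambda>c. \<Sum>r<a. cnj (v r) * f (r*b+c))"
    unfolding qf_def
  proof (intro sum.cong refl)
    fix c c' 
    have "cnj (\<Sum>r<a. cnj (v r) * f (r*b+c)) * Q $$ (c,c') * (\<Sum>r'<a. cnj (v r') * f (r'*b+c')) =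
      (\<Sum>r<a. \<Sum>r'<a. (v r * cnj (f (r*b+c))) * Q $$ (c,c') * (cnj (v r') * f (r'*b+c')))"
      by (simp add: sum_distrib_left sum_distrib_right) (rule sum.swap)
    also have "\<dots> = (\<Sum>r<a. \<Sum>r'<a. T r c r' c')"
      unfolding T_def by (intro sum.cong refl) (simp add: algebra_simps)
    finally show "(\<Sum>r<a. \<Sum>r'<a. T r c r' c') =
      cnj (\<Sum>r<a. cnj (v r) * f (r*b+c)) * Q $$ (c,c') * (\<Sum>r'<a. cnj (v r') * f (r'*b+c'))" by simp
  qed
  finally show ?thesis .
qed

lemma psd_kron:
  assumes P: "psd a P" and Q: "psd b Q"
  shows "psd (a*b) (kron P Q)"
proof (rule psdI)
  have cP: "P \<in> carrier_mat a a" and cQ: "Q \<in> carrier_mat b b" using P Q psd_carrier by auto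
  then show "kron P Q \<in> carrier_mat (a*b) (a*b)" by (rule kron_carrier)
  show "herm (a*b) (kron P Q)" unfolding herm_def
  proof (intro allI impI)
    fix i j assume ij: "i < a*b" "j < a*b"
    have "P $$ (i div b, j div b) = cnj (P $$ (j div b, i div b))"
      using psd_herm[OF P] ij div_lt unfolding herm_def by blast
    moreover have "Q $$ (i mod b, j mod b) = cnj (Q $$ (j mod b, i mod b))"
      using psd_herm[OF Q] ij mod_lt unfolding herm_def by blast
    ultimately show "kron P Q $$ (i,j) = cnj (kron P Q $$ (j,i))"
      using ij cP cQ by (simp add: kron_index)
  qed
  fix f
  obtain K :: nat and w where Kw: "\<forall>i<a. \<forall>j<a. P $$ (i,j) = (\<Sum>l<K. w l i * cnj (w l j))"
    using psd_decomp[OF P] by blast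
  define R1 where "R1 = (\<lambda>l. mat a a (\<lambda>(i,j). w l i * cnj (w l j)))"
  have Pm: "P = msum a {..<K} R1"
    by (rule eq_matI) (use cP Kw in \<open>auto simp: msum_index R1_def\<close>)
  have "kron P Q = msum (a*b) {..<K} (\<lambda>l. kron (R1 l) Q)"
    unfolding Pm by (rule kron_msum1[OF cQ]) (simp add: R1_def)
  then have "qf (a*b) (kron P Q) f = (\<Sum>l<K. qf (a*b) (kron (R1 l) Q) f)"
    by (simp add: qf_msum)
  also have "\<dots> = (\<Sum>l<K. qf b Q (\<lambda>c. \<Sum>r<a. cnj (w l r) * f (r*b+c)))"
    unfolding R1_def by (intro sum.cong refl kron_rank1_qf[OF cQ])
  finally have e: "qf (a*b) (kron P Q) f = (\<Sum>l<K. qf b Q (\<lambda>c. \<Sum>r<a. cnj (w l r) * f (r*b+c)))" .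
  show "Im (qf (a*b) (kron P Q) f) = 0 \<and> Re (qf (a*b) (kron P Q) f) \<ge> 0"
    unfolding e Im_sum Re_sum using psd_qf[OF Q] by (simp add: sum_nonneg)
qed

lemma mult_index_sum:
  assumes "A \<in> carrier_mat n n" "B \<in> carrier_mat n n" "i < n" "j < n"
  shows "(A * B) $$ (i,j) = (\<Sum>k<n. A $$ (i,k) * B $$ (k,j))"
  using assms by (simp add: scalar_prod_def lessThan_atLeast0)

lemma trace_decomp:
  assumes T: "T \<in> carrier_mat N N" and rho: "\<rho> \<in> carrier_mat N N"
    and w: "\<forall>i<N. \<forall>j<N. \<rho> $$ (i,j) = (\<Sum>l<K. w l i * cnj (w l j))"
  shows "mtrace (T * \<rho>) = (\<Sum>l<K. qf N T (w l))"
proof -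
  have "mtrace (T * \<rho>) = (\<Sum>i<N. \<Sum>j<N. T $$ (i,j) * \<rho> $$ (j,i))"
  proof -
    have d: "dim_row (T * \<rho>) = N" using T by simp
    show ?thesis unfolding mtrace_def d
    proof (rule sum.cong[OF refl])
      fix i assume "i \<in> {..<N}"
      then show "(T * \<rho>) $$ (i,i) = (\<Sum>j<N. T $$ (i,j) * \<rho> $$ (j,i))"
        using mult_index_sum[OF T rho] by simp
    qed
  qed
  also have "\<dots> = (\<Sum>i<N. \<Sum>j<N. \<Sum>l<K. cnj (w l i) * T $$ (i,j) * w l j)"
    using w by (intro sum.cong refl) (simp add: sum_distrib_left algebra_simps)
  also have "\<dots> = (\<Sum>i<N. \<Sum>l<K. \<Sum>j<N. cnj (w l i) * T $$ (i,j) * w l j)"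
    by (rule sum.cong[OF refl], rule sum.swap)
  also have "\<dots> = (\<Sum>l<K. \<Sum>i<N. \<Sum>j<N. cnj (w l i) * T $$ (i,j) * w l j)"
    by (rule sum.swap)
  finally show ?thesis unfolding qf_def .
qed

lemma trace_rho:
  assumes w: "\<forall>i<N. \<forall>j<N. \<rho> $$ (i,j) = (\<Sum>l<K. w l i * cnj (w l j))"
    and rho: "\<rho> \<in> carrier_mat N N"
  shows "mtrace \<rho> = complex_of_real (\<Sum>l<K. \<Sum>i<N. (cmod (w l i))^2)"
proof -
  have "mtrace \<rho> = (\<Sum>i<N. \<Sum>l<K. cnj (w l i) * w l i)"
    unfolding mtrace_def
  proof (rule sum.cong)
    show "{..<dim_row \<rho>} = {..<N}" using rho by simp
    fix i assume "i \<in> {..<N}"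
    then have "\<rho> $$ (i,i) = (\<Sum>l<K. w l i * cnj (w l i))" using w by blast
    then show "\<rho> $$ (i,i) = (\<Sum>l<K. cnj (w l i) * w l i)" by (simp add: mult.commute)
  qed
  also have "\<dots> = (\<Sum>l<K. \<Sum>i<N. cnj (w l i) * w l i)" by (rule sum.swap)
  also have "\<dots> = (\<Sum>l<K. complex_of_real (\<Sum>i<N. (cmod (w l i))^2))"
    by (intro sum.cong refl sumsq_real)
  also have "\<dots> = complex_of_real (\<Sum>l<K. \<Sum>i<N. (cmod (w l i))^2)" by (rule of_real_sum[symmetric])
  finally show ?thesis .
qed

lemma povm_psd: assumes "povm d Ans P" "a \<in> Ans" shows "psd d (P a)"
  by (rule bspec[OF conjunct1[OF assms(1)[unfolded povm_def]] assms(2)])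

lemma povm_sum: assumes "povm d Ans P" shows "msum d Ans P = 1\<^sub>m d"
  by (rule conjunct2[OF assms(1)[unfolded povm_def]])

lemma povm_carrier: assumes "povm d Ans P" "a \<in> Ans" shows "P a \<in> carrier_mat d d"
  by (rule psd_carrier[OF povm_psd[OF assms]])

lemma K3_msum3:
  assumes "R \<in> carrier_mat m m" "A \<in> carrier_mat dA dA" "\<And>s. s \<in> S \<Longrightarrow> B s \<in> carrier_mat dB dB"
  shows "kron (kron R A) (msum dB S B) = msum (m*dA*dB) S (\<lambda>s. kron (kron R A) (B s))"
  by (rule kron_msum2) (use assms in \<open>auto intro: kron_carrier\<close>)

lemma K3_msum2:
  assumes R: "R \<in> carrier_mat m m" and B: "B \<in> carrier_mat dB dB" and A: "\<And>s. s \<in> S \<Longrightarrow> A s \<in> carrier_mat dA dA"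
  shows "kron (kron R (msum dA S A)) B = msum (m*dA*dB) S (\<lambda>s. kron (kron R (A s)) B)"
proof -
  have "kron R (msum dA S A) = msum (m*dA) S (\<lambda>s. kron R (A s))"
    by (rule kron_msum2[OF R A])
  moreover have "kron (msum (m*dA) S (\<lambda>s. kron R (A s))) B = msum (m*dA*dB) S (\<lambda>s. kron (kron R (A s)) B)"
    by (rule kron_msum1[OF B]) (use R A in \<open>auto intro: kron_carrier\<close>)
  ultimately show ?thesis by simp
qed

lemma K3_povm3:
  assumes R: "R \<in> carrier_mat m m" and A: "A \<in> carrier_mat dA dA" and B: "povm dB Ans B"
  shows "kron (kron R A) (1\<^sub>m dB) = msum (m*dA*dB) Ans (\<lambda>s. kron (kron R A) (B s))"
proof -
  have cB: "\<And>s. s \<in> Ans \<Longrightarrow> B s \<in> carrier_mat dB dB" by (rule povm_carrier[OF B])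
  show ?thesis using K3_msum3[where S=Ans and B=B, OF R A cB] unfolding povm_sum[OF B] .
qed

lemma K3_povm2:
  assumes R: "R \<in> carrier_mat m m" and B: "B \<in> carrier_mat dB dB" and A: "povm dA Ans A"
  shows "kron (kron R (1\<^sub>m dA)) B = msum (m*dA*dB) Ans (\<lambda>s. kron (kron R (A s)) B)"
proof -
  have cA: "\<And>s. s \<in> Ans \<Longrightarrow> A s \<in> carrier_mat dA dA" by (rule povm_carrier[OF A])
  show ?thesis using K3_msum2[where S=Ans and A=A, OF R B cA] unfolding povm_sum[OF A] .
qed

lemma stepA:
  assumes R: "psd m R" and A: "psd dA A" and B0: "povm dB Ans B0" and B1: "povm dB Ans B1"
    and c: "c \<in> Ans" and fin: "finite Ans"
  shows "Re (qf (m*dA*dB) (kron (kron R A) (B0 c)) f) \<le> (\<Sum>b\<in>Ans. Re (qf (m*dA*dB) (kron (kron R A) (B1 b)) f))"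
proof -
  have cR: "R \<in> carrier_mat m m" and cA: "A \<in> carrier_mat dA dA" using R A psd_carrier by auto
  have e0: "(\<Sum>b\<in>Ans. Re (qf (m*dA*dB) (kron (kron R A) (B0 b)) f)) = Re (qf (m*dA*dB) (kron (kron R A) (1\<^sub>m dB)) f)"
    unfolding K3_povm3[OF cR cA B0] by (simp add: qf_msum Re_sum)
  have e1: "(\<Sum>b\<in>Ans. Re (qf (m*dA*dB) (kron (kron R A) (B1 b)) f)) = Re (qf (m*dA*dB) (kron (kron R A) (1\<^sub>m dB)) f)"
    unfolding K3_povm3[OF cR cA B1] by (simp add: qf_msum Re_sum)
  have "Re (qf (m*dA*dB) (kron (kron R A) (B0 c)) f) \<le> (\<Sum>b\<in>Ans. Re (qf (m*dA*dB) (kron (kron R A) (B0 b)) f))"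
  proof (rule member_le_sum[OF c _ fin])
    fix b assume "b \<in> Ans - {c}"
    then have "b \<in> Ans" by simp
    then have "psd (m*dA*dB) (kron (kron R A) (B0 b))"
      by (rule psd_kron[OF psd_kron[OF R A] povm_psd[OF B0]])
    then show "0 \<le> Re (qf (m*dA*dB) (kron (kron R A) (B0 b)) f)" by (rule psd_qf)
  qed
  then show ?thesis using e0 e1 by simp
qed

lemma stepB:
  assumes R: "psd m R" and B: "psd dB B" and A0: "povm dA Ans A0" and A1: "povm dA Ans A1"
    and c: "c \<in> Ans" and fin: "finite Ans"
  shows "Re (qf (m*dA*dB) (kron (kron R (A1 c)) B) f) \<le> (\<Sum>a\<in>Ans. Re (qf (m*dA*dB) (kron (kron R (A0 a)) B) f))"
proof -
  have cR: "R \<in> carrier_mat m m" and cB: "B \<in> carrier_mat dB dB" using R B psd_carrier by auto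
  have e0: "(\<Sum>a\<in>Ans. Re (qf (m*dA*dB) (kron (kron R (A1 a)) B) f)) = Re (qf (m*dA*dB) (kron (kron R (1\<^sub>m dA)) B) f)"
    unfolding K3_povm2[OF cR cB A1] by (simp add: qf_msum Re_sum)
  have e1: "(\<Sum>a\<in>Ans. Re (qf (m*dA*dB) (kron (kron R (A0 a)) B) f)) = Re (qf (m*dA*dB) (kron (kron R (1\<^sub>m dA)) B) f)"
    unfolding K3_povm2[OF cR cB A0] by (simp add: qf_msum Re_sum)
  have "Re (qf (m*dA*dB) (kron (kron R (A1 c)) B) f) \<le> (\<Sum>a\<in>Ans. Re (qf (m*dA*dB) (kron (kron R (A1 a)) B) f))"
  proof (rule member_le_sum[OF c _ fin])
    fix a assume "a \<in> Ans - {c}"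
    then have "a \<in> Ans" by simp
    then have "psd (m*dA*dB) (kron (kron R (A1 a)) B)"
      by (rule psd_kron[OF psd_kron[OF R povm_psd[OF A1]] B])
    then show "0 \<le> Re (qf (m*dA*dB) (kron (kron R (A1 a)) B) f)" by (rule psd_qf)
  qed
  then show ?thesis using e0 e1 by simp
qed

lemma stepD:
  assumes A0: "povm dA Ans A0" and B1: "povm dB Ans B1"
  shows "(\<Sum>c\<in>Ans. \<Sum>b\<in>Ans. Re (qf (m*dA*dB) (kron (kron (1\<^sub>m m) (A0 c)) (B1 b)) f)) = (\<Sum>i<m*dA*dB. (cmod (f i))^2)"
proof -
  have "(\<Sum>c\<in>Ans. \<Sum>b\<in>Ans. Re (qf (m*dA*dB) (kron (kron (1\<^sub>m m) (A0 c)) (B1 b)) f))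
      = (\<Sum>c\<in>Ans. Re (qf (m*dA*dB) (kron (kron (1\<^sub>m m) (A0 c)) (1\<^sub>m dB)) f))"
  proof (rule sum.cong[OF refl])
    fix c assume c: "c \<in> Ans"
    show "(\<Sum>b\<in>Ans. Re (qf (m*dA*dB) (kron (kron (1\<^sub>m m) (A0 c)) (B1 b)) f)) = Re (qf (m*dA*dB) (kron (kron (1\<^sub>m m) (A0 c)) (1\<^sub>m dB)) f)"
      unfolding K3_povm3[OF one_carrier_mat povm_carrier[OF A0 c] B1] by (simp add: qf_msum Re_sum)
  qed
  also have "\<dots> = Re (qf (m*dA*dB) (kron (kron (1\<^sub>m m) (1\<^sub>m dA)) (1\<^sub>m dB)) f)"
    unfolding K3_povm2[OF one_carrier_mat one_carrier_mat A0] by (simp add: qf_msum Re_sum)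
  also have "kron (kron (1\<^sub>m m) (1\<^sub>m dA)) (1\<^sub>m dB) = 1\<^sub>m (m*dA*dB)" by (simp add: kron_one)
  also have "Re (qf (m*dA*dB) (1\<^sub>m (m*dA*dB)) f) = (\<Sum>i<m*dA*dB. (cmod (f i))^2)"
    unfolding qf_one sumsq_real by simp
  finally show ?thesis .
qed

lemma stepC:
  assumes R0: "psd m R0" and R1: "psd m R1" and A: "psd dA A" and B: "psd dB B"
    and p0: "p0 \<ge> 0" and p1: "p1 \<ge> 0"
    and VM: "\<And>h. p0 * Re (qf m R0 h) + p1 * Re (qf m R1 h) \<le> V * (\<Sum>i<m. (cmod (h i))^2)"
  shows "p0 * Re (qf (m*dA*dB) (kron (kron R0 A) B) f) + p1 * Re (qf (m*dA*dB) (kron (kron R1 A) B) f)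
          \<le> V * Re (qf (m*dA*dB) (kron (kron (1\<^sub>m m) A) B) f)"
proof -
  have c0: "R0 \<in> carrier_mat m m" and c1: "R1 \<in> carrier_mat m m" and cA: "A \<in> carrier_mat dA dA"
    and cB: "B \<in> carrier_mat dB dB" using R0 R1 A B psd_carrier by auto
  define cV where "cV = complex_of_real V"
  define cp0 where "cp0 = complex_of_real p0"
  define cp1 where "cp1 = complex_of_real p1"
  define D where "D = cV \<cdot>\<^sub>m 1\<^sub>m m - (cp0 \<cdot>\<^sub>m R0 + cp1 \<cdot>\<^sub>m R1)"
  have cD: "D \<in> carrier_mat m m" unfolding D_def using c0 c1 by (simp add: minus_carrier_mat)
  have pD: "psd m D"
  proof (rule psdI[OF cD])
    show "herm m D" unfolding herm_def
    proof (intro allI impI)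
      fix i j assume ij: "i < m" "j < m"
      have "R0 $$ (i,j) = cnj (R0 $$ (j,i))" using psd_herm[OF R0] ij unfolding herm_def by blast
      then have h0: "cnj (R0 $$ (j,i)) = R0 $$ (i,j)" by simp
      have "R1 $$ (i,j) = cnj (R1 $$ (j,i))" using psd_herm[OF R1] ij unfolding herm_def by blast
      then have h1: "cnj (R1 $$ (j,i)) = R1 $$ (i,j)" by simp
      show "D $$ (i,j) = cnj (D $$ (j,i))"
        unfolding D_def cV_def cp0_def cp1_def using ij c0 c1 h0 h1 by auto
    qed
    fix h
    have "qf m D h = cV * qf m (1\<^sub>m m) h - (cp0 * qf m R0 h + cp1 * qf m R1 h)"
      unfolding D_def using c0 c1 by (simp add: qf_minus qf_add qf_smult)
    also have "qf m (1\<^sub>m m) h = complex_of_real (\<Sum>i<m. (cmod (h i))^2)"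
      unfolding qf_one by (rule sumsq_real)
    finally have e: "qf m D h = cV * complex_of_real (\<Sum>i<m. (cmod (h i))^2) - (cp0 * qf m R0 h + cp1 * qf m R1 h)" .
    show "Im (qf m D h) = 0 \<and> Re (qf m D h) \<ge> 0"
      unfolding e cV_def cp0_def cp1_def using psd_qf(1)[OF R0, of h] psd_qf(1)[OF R1, of h] VM[of h] by simp
  qed
  have kA: "kron D A = cV \<cdot>\<^sub>m kron (1\<^sub>m m) A - (cp0 \<cdot>\<^sub>m kron R0 A + cp1 \<cdot>\<^sub>m kron R1 A)"
    unfolding D_def using c0 c1 cA
    by (simp add: kron_minus1[of _ m _ A dA] kron_add1[of _ m _ A dA] kron_smult1[of _ m A dA])
  have ck1: "kron (1\<^sub>m m) A \<in> carrier_mat (m*dA) (m*dA)" and ck0: "kron R0 A \<in> carrier_mat (m*dA) (m*dA)"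
    and ck2: "kron R1 A \<in> carrier_mat (m*dA) (m*dA)" using c0 c1 cA by (auto intro: kron_carrier)
  have kB: "kron (kron D A) B = cV \<cdot>\<^sub>m kron (kron (1\<^sub>m m) A) B - (cp0 \<cdot>\<^sub>m kron (kron R0 A) B + cp1 \<cdot>\<^sub>m kron (kron R1 A) B)"
    unfolding kA using ck1 ck0 ck2 cB
    by (simp add: kron_minus1[of _ "m*dA" _ B dB] kron_add1[of _ "m*dA" _ B dB] kron_smult1[of _ "m*dA" B dB])
  have cc1: "kron (kron (1\<^sub>m m) A) B \<in> carrier_mat (m*dA*dB) (m*dA*dB)"
    and cc0: "kron (kron R0 A) B \<in> carrier_mat (m*dA*dB) (m*dA*dB)"
    and cc2: "kron (kron R1 A) B \<in> carrier_mat (m*dA*dB) (m*dA*dB)"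
    using ck1 ck0 ck2 cB by (auto intro: kron_carrier)
  have "qf (m*dA*dB) (kron (kron D A) B) f = cV * qf (m*dA*dB) (kron (kron (1\<^sub>m m) A) B) f
      - (cp0 * qf (m*dA*dB) (kron (kron R0 A) B) f + cp1 * qf (m*dA*dB) (kron (kron R1 A) B) f)"
    unfolding kB using cc1 cc0 cc2 by (simp add: qf_minus qf_add qf_smult)
  moreover have "Re (qf (m*dA*dB) (kron (kron D A) B) f) \<ge> 0"
    using psd_qf(2)[OF psd_kron[OF psd_kron[OF pD A] B]] by blast
  ultimately show ?thesis unfolding cV_def cp0_def cp1_def by simp
qed

lemma key_ineq:
  assumes fin: "finite Ans"
    and R0: "povm m Ans R0" and R1: "povm m Ans R1"
    and A0: "povm dA Ans A0" and A1: "povm dA Ans A1"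
    and B0: "povm dB Ans B0" and B1: "povm dB Ans B1"
    and p0: "p0 \<ge> 0" and p1: "p1 \<ge> 0"
    and VM: "\<And>c b h. c \<in> Ans \<Longrightarrow> b \<in> Ans \<Longrightarrow>
              p0 * Re (qf m (R0 c) h) + p1 * Re (qf m (R1 b) h) \<le> V * (\<Sum>i<m. (cmod (h i))^2)"
  shows "p0 * (\<Sum>c\<in>Ans. Re (qf (m*dA*dB) (kron (kron (R0 c) (A0 c)) (B0 c)) f))
       + p1 * (\<Sum>b\<in>Ans. Re (qf (m*dA*dB) (kron (kron (R1 b) (A1 b)) (B1 b)) f))
       \<le> V * (\<Sum>i<m*dA*dB. (cmod (f i))^2)"
proof -
  define N where "N = m*dA*dB"
  define Q where "Q = (\<lambda>X Y Z. Re (qf N (kron (kron X Y) Z) f))"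
  have 1: "(\<Sum>c\<in>Ans. Q (R0 c) (A0 c) (B0 c)) \<le> (\<Sum>c\<in>Ans. \<Sum>b\<in>Ans. Q (R0 c) (A0 c) (B1 b))"
  proof (rule sum_mono)
    fix c assume c: "c \<in> Ans"
    show "Q (R0 c) (A0 c) (B0 c) \<le> (\<Sum>b\<in>Ans. Q (R0 c) (A0 c) (B1 b))"
      unfolding Q_def N_def by (rule stepA[OF povm_psd[OF R0 c] povm_psd[OF A0 c] B0 B1 c fin])
  qed
  have 2: "(\<Sum>b\<in>Ans. Q (R1 b) (A1 b) (B1 b)) \<le> (\<Sum>b\<in>Ans. \<Sum>c\<in>Ans. Q (R1 b) (A0 c) (B1 b))"
  proof (rule sum_mono)
    fix b assume b: "b \<in> Ans"
    show "Q (R1 b) (A1 b) (B1 b) \<le> (\<Sum>c\<in>Ans. Q (R1 b) (A0 c) (B1 b))"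
      unfolding Q_def N_def by (rule stepB[OF povm_psd[OF R1 b] povm_psd[OF B1 b] A0 A1 b fin])
  qed
  have 3: "(\<Sum>b\<in>Ans. \<Sum>c\<in>Ans. Q (R1 b) (A0 c) (B1 b)) = (\<Sum>c\<in>Ans. \<Sum>b\<in>Ans. Q (R1 b) (A0 c) (B1 b))"
    by (rule sum.swap)
  have "p0 * (\<Sum>c\<in>Ans. Q (R0 c) (A0 c) (B0 c)) + p1 * (\<Sum>b\<in>Ans. Q (R1 b) (A1 b) (B1 b))
     \<le> p0 * (\<Sum>c\<in>Ans. \<Sum>b\<in>Ans. Q (R0 c) (A0 c) (B1 b)) + p1 * (\<Sum>c\<in>Ans. \<Sum>b\<in>Ans. Q (R1 b) (A0 c) (B1 b))"
    by (rule add_mono[OF mult_left_mono[OF 1 p0] mult_left_mono[OF 2[unfolded 3] p1]])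
  also have "\<dots> = (\<Sum>c\<in>Ans. \<Sum>b\<in>Ans. p0 * Q (R0 c) (A0 c) (B1 b) + p1 * Q (R1 b) (A0 c) (B1 b))"
    by (simp add: sum_distrib_left sum.distrib)
  also have "\<dots> \<le> (\<Sum>c\<in>Ans. \<Sum>b\<in>Ans. V * Q (1\<^sub>m m) (A0 c) (B1 b))"
  proof (intro sum_mono)
    fix c b assume c: "c \<in> Ans" and b: "b \<in> Ans"
    show "p0 * Q (R0 c) (A0 c) (B1 b) + p1 * Q (R1 b) (A0 c) (B1 b) \<le> V * Q (1\<^sub>m m) (A0 c) (B1 b)"
      unfolding Q_def N_def
      by (rule stepC[OF povm_psd[OF R0 c] povm_psd[OF R1 b] povm_psd[OF A0 c] povm_psd[OF B1 b] p0 p1 VM[OF c b]])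
  qed
  also have "\<dots> = V * (\<Sum>c\<in>Ans. \<Sum>b\<in>Ans. Q (1\<^sub>m m) (A0 c) (B1 b))"
    by (simp add: sum_distrib_left)
  also have "(\<Sum>c\<in>Ans. \<Sum>b\<in>Ans. Q (1\<^sub>m m) (A0 c) (B1 b)) = (\<Sum>i<m*dA*dB. (cmod (f i))^2)"
    unfolding Q_def N_def by (rule stepD[OF A0 B1])
  finally show ?thesis unfolding Q_def N_def .
qed

lemma kron_one_right: "A \<in> carrier_mat a b \<Longrightarrow> kron A (1\<^sub>m 1) = A"
  by (rule eq_matI) (auto simp: kron_index)

lemma kron_zero_right: "A \<in> carrier_mat a a \<Longrightarrow> kron A (0\<^sub>m 1 1) = 0\<^sub>m a a"
  by (rule eq_matI) (auto simp: kron_index)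

lemma psd_zero: "psd n (0\<^sub>m n n)"
  by (rule psdI) (auto simp: herm_def qf_def)

definition rank1 :: "nat \<Rightarrow> (nat \<Rightarrow> complex) \<Rightarrow> complex mat" where
  "rank1 n h = mat n n (\<lambda>(i,j). h i * cnj (h j))"

lemma rank1_carrier[simp]: "rank1 n h \<in> carrier_mat n n"
  unfolding rank1_def by simp

lemma qf_rank1: "qf n (rank1 n h) g = (\<Sum>i<n. cnj (g i) * h i) * cnj (\<Sum>i<n. cnj (g i) * h i)"
proof -
  have "qf n (rank1 n h) g = (\<Sum>i<n. \<Sum>j<n. (cnj (g i) * h i) * (cnj (h j) * g j))"
    unfolding qf_def rank1_def by (intro sum.cong refl) (simp add: algebra_simps)
  also have "\<dots> = (\<Sum>i<n. cnj (g i) * h i) * (\<Sum>j<n. cnj (h j) * g j)"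
    by (simp add: sum_product)
  finally show ?thesis by (simp add: mult.commute)
qed

lemma psd_rank1: "psd n (rank1 n h)"
proof (rule psdI)
  show "rank1 n h \<in> carrier_mat n n" by simp
  show "herm n (rank1 n h)" unfolding herm_def rank1_def by simp
  fix g
  define Y where "Y = (\<Sum>i<n. cnj (g i) * h i)"
  have "Y * cnj Y = complex_of_real ((cmod Y)^2)" by (metis complex_norm_square)
  then show "Im (qf n (rank1 n h) g) = 0 \<and> Re (qf n (rank1 n h) g) \<ge> 0"
    unfolding qf_rank1 Y_def[symmetric] by simp
qed

lemma trace_rank1:
  assumes T: "T \<in> carrier_mat n n"
  shows "mtrace (T * rank1 n h) = qf n T h"
proof -
  have "mtrace (T * rank1 n h) = (\<Sum>l<(1::nat). qf n T ((\<lambda>_. h) l))"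
    by (rule trace_decomp[OF T]) (auto simp: rank1_def)
  then show ?thesis by simp
qed

lemma mtrace_rank1: "mtrace (rank1 n h) = complex_of_real (\<Sum>i<n. (cmod (h i))^2)"
proof -
  have "mtrace (rank1 n h) = (\<Sum>i<n. cnj (h i) * h i)"
    unfolding mtrace_def rank1_def by (simp add: mult.commute)
  then show ?thesis using sumsq_real by simp
qed

lemma qf_zero_vec:
  assumes "(\<Sum>i<n. (cmod (h i))^2) = 0"
  shows "qf n A h = 0"
proof -
  have "\<forall>i\<in>{..<n}. (cmod (h i))^2 = 0" using assms by (subst sum_nonneg_eq_0_iff[symmetric]) auto
  then have "\<And>i. i < n \<Longrightarrow> h i = 0" by auto
  then show ?thesis unfolding qf_def by simp
qed

lemma qf_scale: "qf n A (\<lambda>i. c * h i) = cnj c * c * qf n A h"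
  unfolding qf_def by (simp add: sum_distrib_left algebra_simps)

lemma win_two:
  assumes "X = {x0, x1}" "x0 \<noteq> x1"
  shows "win_prob X \<pi> Ans R Aop Bop \<rho> =
    \<pi> x0 * (\<Sum>a\<in>Ans. Re (mtrace (kron (kron (R a x0) (Aop x0 a)) (Bop x0 a) * \<rho>))) +
    \<pi> x1 * (\<Sum>a\<in>Ans. Re (mtrace (kron (kron (R a x1) (Aop x1 a)) (Bop x1 a) * \<rho>)))"
  using assms unfolding win_prob_def by simp

lemma quantum_bound:
  assumes X: "X = {x0, x1}" "x0 \<noteq> x1" and fin: "finite Ans"
    and R0: "povm m Ans (\<lambda>a. R a x0)" and R1: "povm m Ans (\<lambda>a. R a x1)"
    and p0: "\<pi> x0 \<ge> 0" and p1: "\<pi> x1 \<ge> 0"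
    and VM: "\<And>c b h. c \<in> Ans \<Longrightarrow> b \<in> Ans \<Longrightarrow>
              \<pi> x0 * Re (qf m (R c x0) h) + \<pi> x1 * Re (qf m (R b x1) h) \<le> V * (\<Sum>i<m. (cmod (h i))^2)"
    and S: "strategy X Ans m dA dB Aop Bop \<rho>"
  shows "win_prob X \<pi> Ans R Aop Bop \<rho> \<le> V"
proof -
  define N where "N = m*dA*dB"
  have dens: "density N \<rho>" and A0: "povm dA Ans (Aop x0)" and A1: "povm dA Ans (Aop x1)"
    and B0: "povm dB Ans (Bop x0)" and B1: "povm dB Ans (Bop x1)"
    using S X unfolding strategy_def N_def by auto
  have pr: "psd N \<rho>" and tr1: "mtrace \<rho> = 1" using dens unfolding density_def by auto
  have cr: "\<rho> \<in> carrier_mat N N" using psd_carrier[OF pr] .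
  obtain K :: nat and w where Kw: "\<forall>i<N. \<forall>j<N. \<rho> $$ (i,j) = (\<Sum>l<K. w l i * cnj (w l j))"
    using psd_decomp[OF pr] by blast
  define sn where "sn = (\<Sum>l<K. \<Sum>i<N. (cmod (w l i))^2)"
  have "mtrace \<rho> = complex_of_real sn" unfolding sn_def by (rule trace_rho[OF Kw cr])
  then have "sn = 1" using tr1 by simp
  then have nrm: "(\<Sum>l<K. \<Sum>i<N. (cmod (w l i))^2) = 1" unfolding sn_def .
  have T: "\<And>Rx Ax Bx a. povm m Ans Rx \<Longrightarrow> povm dA Ans Ax \<Longrightarrow> povm dB Ans Bx \<Longrightarrow> a \<in> Ans \<Longrightarrow>
      Re (mtrace (kron (kron (Rx a) (Ax a)) (Bx a) * \<rho>)) = (\<Sum>l<K. Re (qf N (kron (kron (Rx a) (Ax a)) (Bx a)) (w l)))"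
  proof -
    fix Rx Ax Bx a assume r: "povm m Ans Rx" and aa: "povm dA Ans Ax" and bb: "povm dB Ans Bx" and a: "a \<in> Ans"
    have "kron (kron (Rx a) (Ax a)) (Bx a) \<in> carrier_mat N N" unfolding N_def
      by (intro kron_carrier povm_carrier[OF r a] povm_carrier[OF aa a] povm_carrier[OF bb a])
    from trace_decomp[OF this cr Kw] show "Re (mtrace (kron (kron (Rx a) (Ax a)) (Bx a) * \<rho>)) = (\<Sum>l<K. Re (qf N (kron (kron (Rx a) (Ax a)) (Bx a)) (w l)))"
      by (simp add: Re_sum)
  qed
  have "win_prob X \<pi> Ans R Aop Bop \<rho> =
    \<pi> x0 * (\<Sum>a\<in>Ans. \<Sum>l<K. Re (qf N (kron (kron (R a x0) (Aop x0 a)) (Bop x0 a)) (w l))) +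
    \<pi> x1 * (\<Sum>a\<in>Ans. \<Sum>l<K. Re (qf N (kron (kron (R a x1) (Aop x1 a)) (Bop x1 a)) (w l)))"
    unfolding win_two[OF X] using T[OF R0 A0 B0] T[OF R1 A1 B1] by simp
  also have "\<dots> = (\<Sum>l<K. \<pi> x0 * (\<Sum>a\<in>Ans. Re (qf N (kron (kron (R a x0) (Aop x0 a)) (Bop x0 a)) (w l))) +
    \<pi> x1 * (\<Sum>a\<in>Ans. Re (qf N (kron (kron (R a x1) (Aop x1 a)) (Bop x1 a)) (w l))))"
    by (simp add: sum.swap[of _ Ans] sum_distrib_left sum.distrib)
  also have "\<dots> \<le> (\<Sum>l<K. V * (\<Sum>i<N. (cmod (w l i))^2))"
  proof (rule sum_mono)
    fix l
    show "\<pi> x0 * (\<Sum>a\<in>Ans. Re (qf N (kron (kron (R a x0) (Aop x0 a)) (Bop x0 a)) (w l))) +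
        \<pi> x1 * (\<Sum>a\<in>Ans. Re (qf N (kron (kron (R a x1) (Aop x1 a)) (Bop x1 a)) (w l)))
        \<le> V * (\<Sum>i<N. (cmod (w l i))^2)"
      unfolding N_def by (rule key_ineq[OF fin R0 R1 A0 A1 B0 B1 p0 p1 VM])
  qed
  also have "\<dots> = V" using nrm by (simp add: sum_distrib_left[symmetric])
  finally show ?thesis .
qed

definition sel :: "'a \<Rightarrow> 'a \<Rightarrow> complex mat" where
  "sel e0 e = (if e = e0 then 1\<^sub>m 1 else 0\<^sub>m 1 1)"

lemma povm_sel:
  assumes fin: "finite Ans" and e0: "e0 \<in> Ans"
  shows "povm 1 Ans (sel e0)"
  unfolding povm_def
proof
  show "\<forall>a\<in>Ans. psd 1 (sel e0 a)" unfolding sel_def using psd_one psd_zero by simp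
  show "msum 1 Ans (sel e0) = 1\<^sub>m 1"
  proof (rule eq_matI)
    fix i j assume "i < dim_row (1\<^sub>m 1)" "j < dim_col (1\<^sub>m 1)"
    then have ij: "i = 0" "j = 0" by auto
    have "msum 1 Ans (sel e0) $$ (0,0) = (\<Sum>e\<in>Ans. sel e0 e $$ (0,0))"
      by (rule msum_index) simp_all
    also have "\<dots> = (\<Sum>e\<in>Ans. if e = e0 then 1 else 0)"
      by (intro sum.cong refl) (simp add: sel_def)
    also have "\<dots> = 1" using fin e0 by simp
    finally show "msum 1 Ans (sel e0) $$ (i,j) = 1\<^sub>m 1 $$ (i,j)" using ij by simp
  qed auto
qed

lemma inner_sel:
  assumes fin: "finite Ans" and R: "povm m Ans (\<lambda>a. R a x)" and e0: "e0 \<in> Ans"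
  shows "(\<Sum>e\<in>Ans. Re (mtrace (kron (kron (R e x) (sel e0 e)) (sel e0 e) * rank1 m h))) = Re (qf m (R e0 x) h)"
proof -
  have "\<And>e. e \<in> Ans \<Longrightarrow> Re (mtrace (kron (kron (R e x) (sel e0 e)) (sel e0 e) * rank1 m h)) =
      (if e = e0 then Re (qf m (R e x) h) else 0)"
  proof -
    fix e assume e: "e \<in> Ans"
    have c: "R e x \<in> carrier_mat m m" using povm_carrier[OF R e] .
    show "Re (mtrace (kron (kron (R e x) (sel e0 e)) (sel e0 e) * rank1 m h)) =
      (if e = e0 then Re (qf m (R e x) h) else 0)"
    proof (cases "e = e0")
      case True
      then have s1: "sel e0 e = 1\<^sub>m 1" unfolding sel_def by simp
      have k1: "kron (R e x) (1\<^sub>m 1) = R e x" by (rule kron_one_right[OF c])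
      have "kron (kron (R e x) (sel e0 e)) (sel e0 e) = R e x"
        unfolding s1 k1 k1 ..
      then show ?thesis using True trace_rank1[OF c] by simp
    next
      case False
      then have s0: "sel e0 e = 0\<^sub>m 1 1" unfolding sel_def by simp
      have k0: "kron (R e x) (0\<^sub>m 1 1) = 0\<^sub>m m m" by (rule kron_zero_right[OF c])
      have k00: "kron (0\<^sub>m m m) (0\<^sub>m 1 1) = 0\<^sub>m m m" by (rule kron_zero_right) simp
      have "kron (kron (R e x) (sel e0 e)) (sel e0 e) = 0\<^sub>m m m"
        unfolding s0 k0 k00 ..
      moreover have "0\<^sub>m m m * rank1 m h = 0\<^sub>m m m" by (rule left_mult_zero_mat) simp
      ultimately show ?thesis using False by (simp add: mtrace_def)
    qed
  qed
  then have "(\<Sum>e\<in>Ans. Re (mtrace (kron (kron (R e x) (sel e0 e)) (sel e0 e) * rank1 m h))) =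
      (\<Sum>e\<in>Ans. if e = e0 then Re (qf m (R e x) h) else 0)" by (rule sum.cong[OF refl])
  also have "\<dots> = Re (qf m (R e0 x) h)" using fin e0 by simp
  finally show ?thesis .
qed

lemma density_one: "density 1 (1\<^sub>m 1)"
  unfolding density_def using psd_one by (simp add: mtrace_def)

lemma achieve:
  assumes X: "X = {x0, x1}" "x0 \<noteq> x1" and fin: "finite Ans" and c: "c \<in> Ans" and b: "b \<in> Ans"
    and hn: "(\<Sum>i<m. (cmod (h i))^2) = 1"
    and R0: "povm m Ans (\<lambda>a. R a x0)" and R1: "povm m Ans (\<lambda>a. R a x1)"
  shows "\<pi> x0 * Re (qf m (R c x0) h) + \<pi> x1 * Re (qf m (R b x1) h) \<in>
     {win_prob X \<pi> Ans R Aop Bop \<rho> | dA dB Aop Bop \<rho>.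
            strategy X Ans m dA dB Aop Bop \<rho> \<and> fully_separable m dA dB \<rho>}"
proof -
  define Aop where "Aop = (\<lambda>x. sel (if x = x0 then c else b))"
  define \<rho> where "\<rho> = rank1 m h"
  have "mtrace (rank1 m h) = 1" unfolding mtrace_rank1 hn by simp
  then have dr: "density m \<rho>" unfolding density_def \<rho>_def using psd_rank1 by simp
  have pv: "povm 1 Ans (Aop x)" for x
    unfolding Aop_def using povm_sel[OF fin c] povm_sel[OF fin b] by simp
  have st: "strategy X Ans m 1 1 Aop Aop \<rho>"
    unfolding strategy_def using dr pv by simp
  have k1: "kron \<rho> (1\<^sub>m 1) = \<rho>" by (rule kron_one_right[of _ m m]) (simp add: \<rho>_def)
  have ms: "\<rho> = msum (m*1*1) {..<1} (\<lambda>j. complex_of_real ((\<lambda>_::nat. 1::real) j) \<cdot>\<^sub>m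
      kron (kron ((\<lambda>_::nat. \<rho>) j) ((\<lambda>_::nat. 1\<^sub>m 1) j)) ((\<lambda>_::nat. 1\<^sub>m 1) j))"
    unfolding k1 k1
    by (rule eq_matI) (auto simp: msum_index \<rho>_def rank1_def)
  have fs: "fully_separable m 1 1 \<rho>"
    unfolding fully_separable_def
    apply (rule exI[where x="1::nat"])
    apply (rule exI[where x="\<lambda>_::nat. 1::real"])
    apply (rule exI[where x="\<lambda>_::nat. \<rho>"])
    apply (rule exI[where x="\<lambda>_::nat. 1\<^sub>m 1"])
    apply (rule exI[where x="\<lambda>_::nat. 1\<^sub>m 1"])
    using dr density_one ms by simp
  have a0: "Aop x0 = sel c" and a1: "Aop x1 = sel b" unfolding Aop_def using X by auto
  have wp: "win_prob X \<pi> Ans R Aop Aop \<rho> = \<pi> x0 * Re (qf m (R c x0) h) + \<pi> x1 * Re (qf m (R b x1) h)"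
    unfolding win_two[OF X] a0 a1 \<rho>_def inner_sel[where R=R and x=x0, OF fin R0 c] inner_sel[where R=R and x=x1, OF fin R1 b] ..
  show ?thesis
    apply (rule CollectI)
    apply (rule exI[where x="1::nat"])
    apply (rule exI[where x="1::nat"])
    apply (rule exI[where x=Aop])
    apply (rule exI[where x=Aop])
    apply (rule exI[where x=\<rho>])
    using wp st fs by simp
qed

lemma sup_eq:
  fixes S0 Q :: "real set"
  assumes ne: "S0 \<noteq> {}" and bdd: "bdd_above S0" and sub: "S0 \<subseteq> Q" and le: "\<And>q. q \<in> Q \<Longrightarrow> q \<le> Sup S0"
  shows "Sup Q = Sup S0"
proof (rule antisym)
  have neQ: "Q \<noteq> {}" using ne sub by blast
  show "Sup Q \<le> Sup S0" by (rule cSup_least[OF neQ le])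
  have "bdd_above Q" using le unfolding bdd_above_def by blast
  then show "Sup S0 \<le> Sup Q" by (rule cSup_subset_mono[OF ne _ sub])
qed

lemma le_norm:
  assumes R: "povm m Ans Rx" and fin: "finite Ans" and c: "c \<in> Ans"
  shows "Re (qf m (Rx c) h) \<le> (\<Sum>i<m. (cmod (h i))^2)"
proof -
  have "(\<Sum>a\<in>Ans. Re (qf m (Rx a) h)) = Re (qf m (msum m Ans Rx) h)"
    by (simp add: qf_msum Re_sum)
  also have "\<dots> = (\<Sum>i<m. (cmod (h i))^2)"
    unfolding povm_sum[OF R] qf_one sumsq_real by simp
  finally have e: "(\<Sum>a\<in>Ans. Re (qf m (Rx a) h)) = (\<Sum>i<m. (cmod (h i))^2)" .
  have "Re (qf m (Rx c) h) \<le> (\<Sum>a\<in>Ans. Re (qf m (Rx a) h))"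
  proof (rule member_le_sum[OF c _ fin])
    fix a assume "a \<in> Ans - {c}"
    then have "a \<in> Ans" by simp
    show "0 \<le> Re (qf m (Rx a) h)" by (rule psd_qf(2)[OF povm_psd[OF R \<open>a \<in> Ans\<close>]])
  qed
  then show ?thesis using e by simp
qed

lemma normalize:
  assumes pos: "(\<Sum>i<m. (cmod (h i))^2) > 0"
  defines "nh \<equiv> (\<Sum>i<m. (cmod (h i))^2)"
  defines "h' \<equiv> (\<lambda>i. complex_of_real (1 / sqrt nh) * h i)"
  shows "(\<Sum>i<m. (cmod (h' i))^2) = 1" "\<And>A. qf m A h' = complex_of_real (1 / nh) * qf m A h"
proof -
  have np: "nh > 0" using pos unfolding nh_def .
  have "cmod (complex_of_real (1 / sqrt nh)) = 1 / sqrt nh" using np by (subst norm_of_real) simp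
  moreover have "(1 / sqrt nh)^2 = 1 / nh"
  proof -
    have "(sqrt nh)^2 = nh" using np by (intro real_sqrt_pow2) simp
    then show ?thesis by (simp add: power_divide)
  qed
  ultimately have cm: "(cmod (complex_of_real (1 / sqrt nh)))^2 = 1 / nh" by simp
  have "(\<Sum>i<m. (cmod (h' i))^2) = (\<Sum>i<m. (1 / nh) * (cmod (h i))^2)"
    unfolding h'_def norm_mult power_mult_distrib cm ..
  also have "\<dots> = (1 / nh) * nh" unfolding nh_def by (simp add: sum_distrib_left)
  finally show "(\<Sum>i<m. (cmod (h' i))^2) = 1" using np by simp
  fix A
  have s: "cnj (complex_of_real (1 / sqrt nh)) * complex_of_real (1 / sqrt nh) = complex_of_real (1 / nh)"
  proof -
    have ss: "sqrt nh * sqrt nh = nh" using np by simp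
    have "(1 / sqrt nh) * (1 / sqrt nh) = 1 / (sqrt nh * sqrt nh)" by simp
    then have e: "(1 / sqrt nh) * (1 / sqrt nh) = 1 / nh" unfolding ss .
    have "cnj (complex_of_real (1 / sqrt nh)) * complex_of_real (1 / sqrt nh) = complex_of_real ((1 / sqrt nh) * (1 / sqrt nh))"
      by (simp only: complex_cnj_complex_of_real of_real_mult)
    then show ?thesis unfolding e .
  qed
  show "qf m A h' = complex_of_real (1 / nh) * qf m A h"
    unfolding h'_def qf_scale s ..
qed

theorem mainTheorem3:
  fixes X :: "'x set" and \<pi> :: "'x \<Rightarrow> real" and Ans :: "'a set" and m :: nat
    and R :: "'a \<Rightarrow> 'x \<Rightarrow> complex mat"
  assumes "moe_game X \<pi> Ans m R"
    and "card X = 2"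
  shows "unentangled_value X \<pi> Ans m R = quantum_value X \<pi> Ans m R"
proof -
  have G: "finite X \<and> X \<noteq> {} \<and> finite Ans \<and> Ans \<noteq> {} \<and> m > 0 \<and>
     (\<forall>x\<in>X. \<pi> x \<ge> 0) \<and> (\<Sum>x\<in>X. \<pi> x) = 1 \<and> (\<forall>x\<in>X. povm m Ans (\<lambda>a. R a x))"
    using assms(1) unfolding moe_game_def .
  then have fin: "finite Ans" and ne: "Ans \<noteq> {}" and mpos: "m > 0" and pnn: "\<forall>x\<in>X. \<pi> x \<ge> 0"
    and psum: "(\<Sum>x\<in>X. \<pi> x) = 1" and pv: "\<forall>x\<in>X. povm m Ans (\<lambda>a. R a x)"
    by simp_all
  obtain x0 x1 where X: "X = {x0, x1}" "x0 \<noteq> x1" using assms(2) unfolding card_2_iff by blast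
  have p0: "\<pi> x0 \<ge> 0" and p1: "\<pi> x1 \<ge> 0" using pnn X by auto
  have p01: "\<pi> x0 + \<pi> x1 = 1" using psum X by simp
  have R0: "povm m Ans (\<lambda>a. R a x0)" and R1: "povm m Ans (\<lambda>a. R a x1)" using pv X by auto
  define S0 where "S0 = {\<pi> x0 * Re (qf m (R c x0) h) + \<pi> x1 * Re (qf m (R b x1) h) | c b h.
      c \<in> Ans \<and> b \<in> Ans \<and> (\<Sum>i<m. (cmod (h i))^2) = 1}"
  obtain c0 where c0: "c0 \<in> Ans" using ne by blast
  define e0 where "e0 = (\<lambda>i::nat. if i = 0 then (1::complex) else 0)"
  have "(\<Sum>i<m. (cmod (e0 i))^2) = (\<Sum>i<m. if i = 0 then 1 else 0)"
    unfolding e0_def by (intro sum.cong refl) auto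
  also have "\<dots> = 1" using mpos by simp
  finally have e0n: "(\<Sum>i<m. (cmod (e0 i))^2) = 1" .
  have neS: "S0 \<noteq> {}" unfolding S0_def using c0 e0n by blast
  have bdd: "bdd_above S0" unfolding bdd_above_def
  proof (intro exI ballI)
    fix s assume "s \<in> S0"
    then obtain c b h where s: "s = \<pi> x0 * Re (qf m (R c x0) h) + \<pi> x1 * Re (qf m (R b x1) h)"
      and c: "c \<in> Ans" and b: "b \<in> Ans" and hn: "(\<Sum>i<m. (cmod (h i))^2) = 1"
      unfolding S0_def by blast
    have "Re (qf m (R c x0) h) \<le> 1" using le_norm[OF R0 fin c, of h] hn by simp
    moreover have "Re (qf m (R b x1) h) \<le> 1" using le_norm[OF R1 fin b, of h] hn by simp
    ultimately have "s \<le> \<pi> x0 * 1 + \<pi> x1 * 1" unfolding s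
      by (intro add_mono mult_left_mono p0 p1)
    then show "s \<le> 1" using p01 by simp
  qed
  define V where "V = Sup S0"
  have VM: "\<pi> x0 * Re (qf m (R c x0) h) + \<pi> x1 * Re (qf m (R b x1) h) \<le> V * (\<Sum>i<m. (cmod (h i))^2)"
    if c: "c \<in> Ans" and b: "b \<in> Ans" for c b h
  proof (cases "(\<Sum>i<m. (cmod (h i))^2) = 0")
    case True
    then show ?thesis using qf_zero_vec[OF True] by simp
  next
    case False
    define nh where "nh = (\<Sum>i<m. (cmod (h i))^2)"
    have np: "nh > 0" using False sum_nonneg[of "{..<m}" "\<lambda>i. (cmod (h i))^2"] unfolding nh_def by fastforce
    define h' where "h' = (\<lambda>i. complex_of_real (1 / sqrt nh) * h i)"
    have n1: "(\<Sum>i<m. (cmod (h' i))^2) = 1" using normalize(1)[where m=m and h=h] np unfolding nh_def h'_def by simp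
    have q: "\<And>A. qf m A h' = complex_of_real (1 / nh) * qf m A h"
      using normalize(2)[where m=m and h=h] np unfolding nh_def h'_def by simp
    have "\<pi> x0 * Re (qf m (R c x0) h') + \<pi> x1 * Re (qf m (R b x1) h') \<in> S0"
      unfolding S0_def using c b n1 by blast
    then have "\<pi> x0 * Re (qf m (R c x0) h') + \<pi> x1 * Re (qf m (R b x1) h') \<le> V"
      unfolding V_def by (rule cSup_upper[OF _ bdd])
    then have "(1 / nh) * (\<pi> x0 * Re (qf m (R c x0) h) + \<pi> x1 * Re (qf m (R b x1) h)) \<le> V"
      unfolding q by (simp add: algebra_simps)
    then have "\<pi> x0 * Re (qf m (R c x0) h) + \<pi> x1 * Re (qf m (R b x1) h) \<le> V * nh"
      using np by (simp add: field_simps)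
    then show ?thesis unfolding nh_def .
  qed
  define Qs where "Qs = {win_prob X \<pi> Ans R Aop Bop \<rho> | dA dB Aop Bop \<rho>. strategy X Ans m dA dB Aop Bop \<rho>}"
  define Us where "Us = {win_prob X \<pi> Ans R Aop Bop \<rho> | dA dB Aop Bop \<rho>.
            strategy X Ans m dA dB Aop Bop \<rho> \<and> fully_separable m dA dB \<rho>}"
  have Qb: "q \<le> V" if "q \<in> Qs" for q
  proof -
    from that obtain dA dB Aop Bop \<rho> where q: "q = win_prob X \<pi> Ans R Aop Bop \<rho>"
      and S: "strategy X Ans m dA dB Aop Bop \<rho>" unfolding Qs_def by blast
    show ?thesis unfolding q by (rule quantum_bound[OF X fin R0 R1 p0 p1 VM S])
  qed
  have UQ: "Us \<subseteq> Qs" unfolding Us_def Qs_def by blast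
  have SU: "S0 \<subseteq> Us"
  proof
    fix s assume "s \<in> S0"
    then obtain c b h where s: "s = \<pi> x0 * Re (qf m (R c x0) h) + \<pi> x1 * Re (qf m (R b x1) h)"
      and c: "c \<in> Ans" and b: "b \<in> Ans" and hn: "(\<Sum>i<m. (cmod (h i))^2) = 1"
      unfolding S0_def by blast
    show "s \<in> Us" unfolding s Us_def by (rule achieve[OF X fin c b hn R0 R1])
  qed
  have "Sup Us = V" unfolding V_def
    by (rule sup_eq[OF neS bdd SU]) (use Qb UQ in \<open>auto simp: V_def\<close>)
  moreover have "Sup Qs = V" unfolding V_def
    by (rule sup_eq[OF neS bdd]) (use SU UQ Qb in \<open>auto simp: V_def\<close>)
  ultimately show ?thesis unfolding unentangled_value_def quantum_value_def Us_def[symmetric] Qs_def[symmetric]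
    by simp
qed

end
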